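(* Let $\Omega\subset\mathbb R^d$ be a bounded Borel set, with Lebesgue boundary $\partial^*\Omega$. Then: 1. $\mathbb 1_\Omega\in B^0_{\infty,\infty}(\mathbb R^d)$. 2. Let $s\in\mathbb R$ and $p\in(0,\infty)$. If $\sup_{j\in\mathbb N}2^{(sp-d)j}N_j(\partial^*\Omega)<\infty$, then $\mathbb 1_\Omega\in B^s_{p,\infty}(\mathbb R^d)$. 3. Let $s\in\mathbb R$ and $p,q\in(0,\infty)$. If $\sum_{j=0}^\infty\big(2^{(sp-d)j}N_j(\partial^*\Omega)\big)^{q/p}<\infty$, then $\mathbb 1_\Omega\in B^s_{p,q}(\mathbb R^d)$.
   Context: $\lambda$ denotes Lebesgue measure. The Lebesgue boundary $\partial^*\Omega$ of a Borel set $\Omega$ is the set of $x\in\mathbb R^d$ such that for every $r>0$, $\lambda(B(x,r)\cap\Omega)>0$ and $\lambda(B(x,r)\cap\Omega^c)>0$. For $A\subset\mathbb R^d$ and $j\in\mathbb N$, $N_j(A)$ is the number of $k\in\mathbb Z^d$ such that $A\cap\prod_{i=1}^d[k_i2^{-j},(k_i+1)2^{-j}]\neq\varnothing$. Besov spaces via wavelets: fix $r$ large and compactly supported Daubechies wavelets $\phi,\psi^{(1)},\dots,\psi^{(2^d-1)}$ of class $C^r$, with support exactly $[0,N]^d$, $\int\phi=1$, $\psi^{(i)}$ with vanishing moments up to order $r-1$, such that $\{\phi(\cdot-k),2^{dj/2}\psi^{(i)}(2^j\cdot-k)\}_{j\in\mathbb N,i,k\in\mathbb Z^d}$ is an orthonormal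 basis of $L^2(\mathbb R^d)$. For a distribution $T$ of order $\le r$: $c_k=\langle T,\phi(\cdot-k)\rangle$, $c^{(i)}_{j,k}=2^{dj}\langle T,\psi^{(i)}(2^j\cdot-k)\rangle$. For $s\in\mathbb R$, $p,q\in(0,\infty]$, $T\in B^s_{p,q}(\mathbb R^d)$ iff $\sum_k|c_k|^p<\infty$ and $\sum_{j\ge0}\big(\sum_{k\in\mathbb Z^d}\sum_{i=1}^{2^d-1}|2^{(s-d/p)j}c^{(i)}_{j,k}|^p\big)^{q/p}<\infty$, with the usual modifications (suprema) if $p$ or $q$ is infinite. *)

theory Defs
  imports "HOL-Analysis.Analysis"
begin

(* Dimension d = DIM('a); R^d is an abstract euclidean space 'a. *)

definition int_lattice :: "'a::euclidean_space set" where
  "int_lattice = {k. \<forall>b\<in>Basis. k \<bullet> b \<in> \<int>}"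

definition lebesgue_boundary :: "'a::euclidean_space set \<Rightarrow> 'a set" where
  "lebesgue_boundary \<Omega> = {x. \<forall>r>0. emeasure lebesgue (ball x r \<inter> \<Omega>) > 0
                                     \<and> emeasure lebesgue (ball x r - \<Omega>) > 0}"

definition dyadic_cube :: "nat \<Rightarrow> 'a::euclidean_space \<Rightarrow> 'a set" where
  "dyadic_cube j k = cbox ((2 powr - real j) *\<^sub>R k) ((2 powr - real j) *\<^sub>R (k + One))"

definition Ncount :: "nat \<Rightarrow> 'a::euclidean_space set \<Rightarrow> nat" where
  "Ncount j A = card {k \<in> int_lattice. A \<inter> dyadic_cube j k \<noteq> {}}"

fun C_k :: "nat \<Rightarrow> ('a::euclidean_space \<Rightarrow> real) \<Rightarrow> bool" where
  "C_k 0 f = continuous_on UNIV f"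
| "C_k (Suc n) f = ((\<forall>x. f differentiable (at x)) \<and> continuous_on UNIV f \<and>
       (\<forall>b\<in>Basis. C_k n (\<lambda>x. frechet_derivative f (at x) b)))"

(* indices of the wavelet basis: Inl k (scaling functions), Inr (j,i,k) (wavelets) *)
definition wavelet_index :: "('a::euclidean_space + (nat \<times> nat \<times> 'a)) set" where
  "wavelet_index = Inl ` int_lattice \<union>
     Inr ` (UNIV \<times> {1..2^DIM('a) - 1} \<times> int_lattice)"

definition wavelet_fun ::
  "('a::euclidean_space \<Rightarrow> real) \<Rightarrow> (nat \<Rightarrow> 'a \<Rightarrow> real) \<Rightarrow>
   ('a + (nat \<times> nat \<times> 'a)) \<Rightarrow> 'a \<Rightarrow> real" where
  "wavelet_fun \<phi> \<psi> a = (case a of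
      Inl k \<Rightarrow> (\<lambda>x. \<phi> (x - k))
    | Inr (j, i, k) \<Rightarrow> (\<lambda>x. 2 powr (real DIM('a) * real j / 2) * \<psi> i ((2 ^ j) *\<^sub>R x - k)))"

(* Admissible compactly supported (Daubechies-type) wavelet system of class C^r,
   supports exactly [0,N]^d, integral of phi = 1, vanishing moments up to order r-1,
   and the family is an orthonormal basis of L^2(R^d) (orthonormality + Parseval). *)
definition wavelet_system ::
  "nat \<Rightarrow> nat \<Rightarrow> ('a::euclidean_space \<Rightarrow> real) \<Rightarrow> (nat \<Rightarrow> 'a \<Rightarrow> real) \<Rightarrow> bool" where
  "wavelet_system r N \<phi> \<psi> \<longleftrightarrow>
     C_k r \<phi> \<and> (\<forall>i\<in>{1..2^DIM('a) - 1}. C_k r (\<psi> i)) \<and>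
     closure {x. \<phi> x \<noteq> 0} = cbox 0 (real N *\<^sub>R One) \<and>
     (\<forall>i\<in>{1..2^DIM('a) - 1}. closure {x. \<psi> i x \<noteq> 0} = cbox 0 (real N *\<^sub>R One)) \<and>
     integrable lborel \<phi> \<and> (LINT x|lborel. \<phi> x) = 1 \<and>
     (\<forall>i\<in>{1..2^DIM('a) - 1}. \<forall>\<alpha>::'a \<Rightarrow> nat. (\<Sum>b\<in>Basis. \<alpha> b) \<le> r - 1 \<longrightarrow>
        integrable lborel (\<lambda>x. (\<Prod>b\<in>Basis. (x \<bullet> b) ^ \<alpha> b) * \<psi> i x) \<and>
        (LINT x|lborel. (\<Prod>b\<in>Basis. (x \<bullet> b) ^ \<alpha> b) * \<psi> i x) = 0) \<and>
     (\<forall>a\<in>wavelet_index. wavelet_fun \<phi> \<psi> a \<in> borel_measurable lborel) \<and>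
     (\<forall>a\<in>wavelet_index. \<forall>b\<in>wavelet_index.
        integrable lborel (\<lambda>x. wavelet_fun \<phi> \<psi> a x * wavelet_fun \<phi> \<psi> b x) \<and>
        (LINT x|lborel. wavelet_fun \<phi> \<psi> a x * wavelet_fun \<phi> \<psi> b x) = (if a = b then 1 else 0)) \<and>
     (\<forall>f. f \<in> borel_measurable lborel \<and> integrable lborel (\<lambda>x. (f x)\<^sup>2) \<longrightarrow>
        ((\<lambda>a. (LINT x|lborel. f x * wavelet_fun \<phi> \<psi> a x)\<^sup>2) has_sum (LINT x|lborel. (f x)\<^sup>2))
          wavelet_index)"

definition coef_phi :: "('a::euclidean_space \<Rightarrow> real) \<Rightarrow> ('a \<Rightarrow> real) \<Rightarrow> 'a \<Rightarrow> real" where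
  "coef_phi \<phi> T k = (LINT x|lborel. T x * \<phi> (x - k))"

definition coef_psi :: "(nat \<Rightarrow> 'a::euclidean_space \<Rightarrow> real) \<Rightarrow> ('a \<Rightarrow> real) \<Rightarrow>
    nat \<Rightarrow> nat \<Rightarrow> 'a \<Rightarrow> real" where
  "coef_psi \<psi> T j i k = 2 ^ (DIM('a) * j) * (LINT x|lborel. T x * \<psi> i ((2 ^ j) *\<^sub>R x - k))"

(* Besov membership T \<in> B^s_{p,q}; p, q \<in> (0, \<infinity>], \<infinity> = top of ennreal *)
definition besov :: "('a::euclidean_space \<Rightarrow> real) \<Rightarrow> (nat \<Rightarrow> 'a \<Rightarrow> real) \<Rightarrow>
    real \<Rightarrow> ennreal \<Rightarrow> ennreal \<Rightarrow> ('a \<Rightarrow> real) \<Rightarrow> bool" where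
  "besov \<phi> \<psi> s p q T \<longleftrightarrow>
     (let d = real DIM('a); I = {1..2^DIM('a) - 1} \<times> int_lattice in
      if p = \<infinity> then
        bdd_above ((\<lambda>k. \<bar>coef_phi \<phi> T k\<bar>) ` int_lattice) \<and>
        (\<forall>j. bdd_above ((\<lambda>(i,k). \<bar>2 powr (s * real j) * coef_psi \<psi> T j i k\<bar>) ` I)) \<and>
        (let M = (\<lambda>j. SUP (i,k)\<in>I. \<bar>2 powr (s * real j) * coef_psi \<psi> T j i k\<bar>) in
          if q = \<infinity> then bdd_above (range M)
          else summable (\<lambda>j. M j powr enn2real q))
      else
        (let p' = enn2real p in
        (\<lambda>k. \<bar>coef_phi \<phi> T k\<bar> powr p') summable_on int_lattice \<and>
        (\<forall>j. (\<lambda>(i,k). \<bar>2 powr ((s - d / p') * real j) * coef_psi \<psi> T j i k\<bar> powr p') summable_on I) \<and>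
        (let S = (\<lambda>j. \<Sum>\<^sub>\<infinity>(i,k)\<in>I. \<bar>2 powr ((s - d / p') * real j) * coef_psi \<psi> T j i k\<bar> powr p') in
          if q = \<infinity> then bdd_above (range S)
          else summable (\<lambda>j. S j powr (enn2real q / p')))))"

end

theory Submission
  imports Defs
begin

lemma affine_change:
  fixes g :: "'a::euclidean_space \<Rightarrow> real" and k :: 'a
  assumes g[measurable]: "g \<in> borel_measurable lborel"
  shows "integrable lborel (\<lambda>x. g ((2^j) *\<^sub>R x - k)) \<longleftrightarrow> integrable lborel g"
    and "(LINT x|lborel. g ((2^j) *\<^sub>R x - k)) = (LINT x|lborel. g x) / 2^(DIM('a)*j)"
proof -
  define c :: real where "c = 2^j"
  have c0: "c \<noteq> 0" "c > 0" unfolding c_def by auto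
  define T where "T x = - k + c *\<^sub>R x" for x :: 'a
  have T[measurable]: "T \<in> borel_measurable borel" unfolding T_def[abs_def] by simp
  have L: "lborel = density (distr lborel borel T) (\<lambda>_. \<bar>c\<bar>^DIM('a))"
    unfolding T_def using lborel_affine[OF c0(1), of "-k"] by simp
  have gT: "(\<lambda>x. g ((2^j) *\<^sub>R x - k)) = (\<lambda>x. g (T x))"
    unfolding T_def c_def by (simp add: algebra_simps)
  have "integrable lborel g \<longleftrightarrow> integrable (density (distr lborel borel T) (\<lambda>_. \<bar>c\<bar>^DIM('a))) g"
    using L by simp
  also have "\<dots> \<longleftrightarrow> integrable (distr lborel borel T) (\<lambda>x. \<bar>c\<bar>^DIM('a) *\<^sub>R g x)"
    by (subst integrable_density) auto
  also have "\<dots> \<longleftrightarrow> integrable lborel (\<lambda>x. \<bar>c\<bar>^DIM('a) *\<^sub>R g (T x))"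
    by (subst integrable_distr_eq) auto
  also have "\<dots> \<longleftrightarrow> integrable lborel (\<lambda>x. g (T x))"
    using c0 by simp
  finally show "integrable lborel (\<lambda>x. g ((2^j) *\<^sub>R x - k)) \<longleftrightarrow> integrable lborel g"
    unfolding gT by simp
  have "(LINT x|lborel. g x) = (LINT x|density (distr lborel borel T) (\<lambda>_. \<bar>c\<bar>^DIM('a)). g x)"
    using L by simp
  also have "\<dots> = (LINT x|distr lborel borel T. \<bar>c\<bar>^DIM('a) *\<^sub>R g x)"
    by (subst integral_density) auto
  also have "\<dots> = (LINT x|lborel. \<bar>c\<bar>^DIM('a) *\<^sub>R g (T x))"
    by (subst integral_distr) auto
  also have "\<dots> = c^DIM('a) * (LINT x|lborel. g (T x))"
    using c0 by simp
  finally show "(LINT x|lborel. g ((2^j) *\<^sub>R x - k)) = (LINT x|lborel. g x) / 2^(DIM('a)*j)"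
    unfolding gT c_def by (simp add: power_mult mult.commute)
qed


lemma ball_pos: "0 < e \<Longrightarrow> 0 < emeasure lborel (ball (y::'a::euclidean_space) e)"
proof -
  assume "0 < e"
  then obtain a b where box: "y \<in> box a b" "box a b \<subseteq> ball y e"
    using rational_boxes[of e y] by blast
  then have "0 < emeasure lborel (box a b)"
    by (auto simp: emeasure_lborel_box_eq mem_box algebra_simps intro!: prod_pos)
  also have "\<dots> \<le> emeasure lborel (ball y e)"
    using box by (auto intro!: emeasure_mono)
  finally show ?thesis .
qed

lemma compact_cover_null:
  fixes A S :: "'a::euclidean_space set"
  assumes A: "A \<in> sets borel" and S: "compact S"
    and cov: "S \<subseteq> \<Union>{ball x r | x r. r > 0 \<and> ball x r \<inter> A \<in> null_sets lborel}"
  shows "S \<inter> A \<in> null_sets lborel"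
proof -
  obtain F where F: "F \<subseteq> {ball x r | x r. r > 0 \<and> ball x r \<inter> A \<in> null_sets lborel}"
      "finite F" "S \<subseteq> \<Union>F"
    using compactE[OF S cov] by blast
  have "(\<Union>B\<in>F. B \<inter> A) \<in> null_sets lborel"
    using F by (intro null_sets_UN') (auto intro: countable_finite)
  moreover have "S \<inter> A \<subseteq> (\<Union>B\<in>F. B \<inter> A)" using F by blast
  moreover have "S \<inter> A \<in> sets lborel" using A S by (simp add: compact_imp_closed borel_closed)
  ultimately show ?thesis by (metis null_sets_subset)
qed

lemma null_or_conull:
  fixes \<Omega> S :: "'a::euclidean_space set"
  assumes \<Omega>: "\<Omega> \<in> sets borel" and S: "compact S" "connected S"
    and D: "S \<inter> lebesgue_boundary \<Omega> = {}"
  shows "S \<inter> \<Omega> \<in> null_sets lborel \<or> S - \<Omega> \<in> null_sets lborel"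
proof -
  have \<Omega>c: "- \<Omega> \<in> sets borel" using \<Omega> by auto
  define E1 where "E1 = \<Union>{ball x r | x r. r > 0 \<and> ball x r \<inter> \<Omega> \<in> null_sets lborel}"
  define E2 where "E2 = \<Union>{ball x r | x r. r > 0 \<and> ball x r \<inter> - \<Omega> \<in> null_sets lborel}"
  have o: "open E1" "open E2" unfolding E1_def E2_def by auto
  have cov: "S \<subseteq> E1 \<union> E2"
  proof
    fix x assume "x \<in> S"
    then have "x \<notin> lebesgue_boundary \<Omega>" using D by blast
    then obtain r where r: "r > 0" "\<not> (emeasure lebesgue (ball x r \<inter> \<Omega>) > 0 \<and> emeasure lebesgue (ball x r - \<Omega>) > 0)"
      unfolding lebesgue_boundary_def by blast
    have "ball x r \<inter> \<Omega> \<in> sets borel" "ball x r \<inter> - \<Omega> \<in> sets borel" using \<Omega> by auto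
    then have "emeasure lborel (ball x r \<inter> \<Omega>) = 0 \<or> emeasure lborel (ball x r \<inter> - \<Omega>) = 0"
      using r(2) by (simp add: Diff_eq)
    then have "ball x r \<inter> \<Omega> \<in> null_sets lborel \<or> ball x r \<inter> - \<Omega> \<in> null_sets lborel"
      using \<Omega> by (auto simp: null_sets_def)
    moreover have "x \<in> ball x r" using r(1) by simp
    ultimately show "x \<in> E1 \<union> E2" unfolding E1_def E2_def using r(1) by blast
  qed
  have disj: "E1 \<inter> E2 = {}"
  proof (rule ccontr)
    assume "E1 \<inter> E2 \<noteq> {}"
    then obtain y x1 r1 x2 r2 where y: "y \<in> ball x1 r1" "y \<in> ball x2 r2"
      and n1: "ball x1 r1 \<inter> \<Omega> \<in> null_sets lborel" and n2: "ball x2 r2 \<inter> - \<Omega> \<in> null_sets lborel"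
      unfolding E1_def E2_def by blast
    obtain e where e: "e > 0" "ball y e \<subseteq> ball x1 r1 \<inter> ball x2 r2"
      using y by (metis Int_iff open_ball open_Int openE)
    have "ball y e \<subseteq> (ball x1 r1 \<inter> \<Omega>) \<union> (ball x2 r2 \<inter> - \<Omega>)" using e by blast
    moreover have "(ball x1 r1 \<inter> \<Omega>) \<union> (ball x2 r2 \<inter> - \<Omega>) \<in> null_sets lborel"
      using n1 n2 by auto
    ultimately have "ball y e \<in> null_sets lborel"
      by (metis null_sets_subset sets_lborel borel_open open_ball)
    then show False using ball_pos[OF e(1), of y] by (simp add: null_sets_def)
  qed
  have "E1 \<inter> S = {} \<or> E2 \<inter> S = {}"
    using connectedD[OF S(2) o] disj cov by blast
  then show ?thesis
  proof
    assume "E1 \<inter> S = {}"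
    then have "S \<subseteq> E2" using cov by blast
    then have "S \<inter> - \<Omega> \<in> null_sets lborel"
      using compact_cover_null[OF \<Omega>c S(1)] unfolding E2_def by blast
    then show ?thesis by (simp add: Diff_eq)
  next
    assume "E2 \<inter> S = {}"
    then have "S \<subseteq> E1" using cov by blast
    then show ?thesis
      using compact_cover_null[OF \<Omega> S(1)] unfolding E1_def by blast
  qed
qed


definition supp_cube :: "nat \<Rightarrow> nat \<Rightarrow> 'a::euclidean_space \<Rightarrow> 'a set" where
  "supp_cube N j k = cbox ((1/2^j) *\<^sub>R k) ((1/2^j) *\<^sub>R (k + real N *\<^sub>R One))"

lemma mem_supp_cube:
  "((2::real)^j) *\<^sub>R x - k \<in> cbox 0 (real N *\<^sub>R One) \<longleftrightarrow> x \<in> supp_cube N j k"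
  unfolding supp_cube_def mem_box
  by (auto simp: inner_simps field_simps)

lemma coef_bound:
  fixes g :: "'a::euclidean_space \<Rightarrow> real"
  assumes g: "integrable lborel g" and \<Omega>: "\<Omega> \<in> sets borel"
  shows "\<bar>2 ^ (DIM('a) * j) * (LINT x|lborel. indicator \<Omega> x * g ((2 ^ j) *\<^sub>R x - k))\<bar>
          \<le> (LINT x|lborel. \<bar>g x\<bar>)"
proof -
  have gm[measurable]: "g \<in> borel_measurable lborel" using g by (rule borel_measurable_integrable)
  have h: "integrable lborel (\<lambda>x. g ((2 ^ j) *\<^sub>R x - k))"
    using affine_change(1)[OF gm] g by blast
  have h2: "integrable lborel (\<lambda>x. indicator \<Omega> x * g ((2 ^ j) *\<^sub>R x - k))"
    using integrable_real_mult_indicator[of \<Omega> lborel "\<lambda>x. g ((2 ^ j) *\<^sub>R x - k)"] h \<Omega>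
    by (simp add: mult.commute)
  have "\<bar>(LINT x|lborel. indicator \<Omega> x * g ((2 ^ j) *\<^sub>R x - k))\<bar>
        \<le> (LINT x|lborel. \<bar>indicator \<Omega> x * g ((2 ^ j) *\<^sub>R x - k)\<bar>)"
    by (rule integral_abs_bound)
  also have "\<dots> \<le> (LINT x|lborel. \<bar>g ((2 ^ j) *\<^sub>R x - k)\<bar>)"
    using h h2 by (intro integral_mono) (auto simp: indicator_def)
  also have "\<dots> = (LINT x|lborel. \<bar>g x\<bar>) / 2^(DIM('a)*j)"
    by (rule affine_change(2)) simp
  finally show ?thesis by (simp add: abs_mult field_simps)
qed

lemma coef_zero:
  fixes g :: "'a::euclidean_space \<Rightarrow> real"
  assumes g: "integrable lborel g" and g0: "(LINT x|lborel. g x) = 0"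
    and supp: "\<And>y. g y \<noteq> 0 \<Longrightarrow> y \<in> cbox 0 (real N *\<^sub>R One)"
    and \<Omega>: "\<Omega> \<in> sets borel" and D: "supp_cube N j k \<inter> lebesgue_boundary \<Omega> = {}"
  shows "(LINT x|lborel. indicator \<Omega> x * g ((2 ^ j) *\<^sub>R x - k)) = 0"
proof -
  have gm[measurable]: "g \<in> borel_measurable lborel" using g by (rule borel_measurable_integrable)
  have [measurable]: "\<Omega> \<in> sets lborel" using \<Omega> by simp
  have cpt: "compact (supp_cube N j k)" "connected (supp_cube N j k)"
    unfolding supp_cube_def by (auto intro!: convex_connected)
  have z: "g ((2 ^ j) *\<^sub>R x - k) = 0" if "x \<notin> supp_cube N j k" for x
    using supp[of "(2 ^ j) *\<^sub>R x - k"] that mem_supp_cube[of j x k N] by auto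
  from null_or_conull[OF \<Omega> cpt(1,2) D] show ?thesis
  proof
    assume n: "supp_cube N j k \<inter> \<Omega> \<in> null_sets lborel"
    show ?thesis
    proof (rule integral_eq_zero_AE)
      show "AE x in lborel. indicator \<Omega> x * g ((2 ^ j) *\<^sub>R x - k) = 0"
        using AE_not_in[OF n] by eventually_elim (auto simp: z indicator_def)
    qed
  next
    assume n: "supp_cube N j k - \<Omega> \<in> null_sets lborel"
    have "(LINT x|lborel. indicator \<Omega> x * g ((2 ^ j) *\<^sub>R x - k)) = (LINT x|lborel. g ((2 ^ j) *\<^sub>R x - k))"
    proof (rule integral_cong_AE)
      show "AE x in lborel. indicator \<Omega> x * g ((2 ^ j) *\<^sub>R x - k) = g ((2 ^ j) *\<^sub>R x - k)"
        using AE_not_in[OF n] by eventually_elim (auto simp: z indicator_def)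
    qed auto
    also have "\<dots> = 0" using affine_change(2)[OF gm, of j k] g0 by simp
    finally show ?thesis .
  qed
qed


lemma lattice_diff: "k \<in> int_lattice \<Longrightarrow> m \<in> int_lattice \<Longrightarrow> k - m \<in> int_lattice"
  unfolding int_lattice_def by (auto simp: inner_diff_left)

lemma lattice_zero: "0 \<in> int_lattice"
  unfolding int_lattice_def by auto

lemma finite_lattice_box:
  "finite {k \<in> (int_lattice :: 'a::euclidean_space set). \<forall>b\<in>Basis. \<bar>k \<bullet> b\<bar> \<le> R}"
proof (rule inj_on_finite[where f="\<lambda>k. restrict (\<lambda>b. \<lfloor>k \<bullet> b\<rfloor>) Basis"])
  show "inj_on (\<lambda>k. restrict (\<lambda>b. \<lfloor>k \<bullet> b\<rfloor>) Basis) {k \<in> (int_lattice :: 'a set). \<forall>b\<in>Basis. \<bar>k \<bullet> b\<bar> \<le> R}"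
  proof (rule inj_onI)
    fix x y :: 'a
    assume x: "x \<in> {k \<in> int_lattice. \<forall>b\<in>Basis. \<bar>k \<bullet> b\<bar> \<le> R}"
      and y: "y \<in> {k \<in> int_lattice. \<forall>b\<in>Basis. \<bar>k \<bullet> b\<bar> \<le> R}"
      and eq: "restrict (\<lambda>b. \<lfloor>x \<bullet> b\<rfloor>) Basis = restrict (\<lambda>b. \<lfloor>y \<bullet> b\<rfloor>) Basis"
    show "x = y"
    proof (rule euclidean_eqI)
      fix b :: 'a assume b: "b \<in> Basis"
      have "\<lfloor>x \<bullet> b\<rfloor> = \<lfloor>y \<bullet> b\<rfloor>" using fun_cong[OF eq, of b] b by simp
      moreover have "x \<bullet> b \<in> \<int>" "y \<bullet> b \<in> \<int>" using x y b unfolding int_lattice_def by auto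
      ultimately show "x \<bullet> b = y \<bullet> b" by (metis floor_of_int Ints_cases)
    qed
  qed
  show "(\<lambda>k. restrict (\<lambda>b. \<lfloor>k \<bullet> b\<rfloor>) Basis) ` {k \<in> int_lattice. \<forall>b\<in>Basis. \<bar>k \<bullet> b\<bar> \<le> R}
        \<subseteq> (\<Pi>\<^sub>E b\<in>(Basis::'a set). {-\<lceil>R\<rceil>..\<lceil>R\<rceil>})"
  proof clarsimp
    fix k :: 'a and b :: 'a
    assume "\<forall>b\<in>Basis. \<bar>k \<bullet> b\<bar> \<le> R" "b \<in> Basis"
    then have "\<bar>k \<bullet> b\<bar> \<le> R" by blast
    then show "- \<lceil>R\<rceil> \<le> \<lfloor>k \<bullet> b\<rfloor> \<and> \<lfloor>k \<bullet> b\<rfloor> \<le> \<lceil>R\<rceil>"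
      by (smt (verit) ceiling_correct floor_less_cancel floor_le_ceiling le_floor_iff of_int_minus)
  qed
  show "finite (\<Pi>\<^sub>E b\<in>(Basis::'a set). {-\<lceil>R\<rceil>..\<lceil>R\<rceil>})"
    by (rule finite_PiE) auto
qed

lemma floor_vec:
  fixes x :: "'a::euclidean_space"
  defines "a \<equiv> (\<Sum>b\<in>Basis. of_int \<lfloor>x \<bullet> b\<rfloor> *\<^sub>R b)"
  shows "a \<in> int_lattice" "\<And>b. b \<in> Basis \<Longrightarrow> a \<bullet> b = of_int \<lfloor>x \<bullet> b\<rfloor>"
proof -
  show ab: "a \<bullet> b = of_int \<lfloor>x \<bullet> b\<rfloor>" if "b \<in> Basis" for b
    unfolding a_def using that by (simp add: inner_sum_left inner_Basis if_distrib cong: if_cong)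
  show "a \<in> int_lattice" unfolding int_lattice_def using ab by auto
qed

lemma two_powr_neg: "(2::real) powr - real j = 1 / 2^j"
  by (simp add: powr_minus_divide powr_realpow)

lemma count_cover:
  fixes A :: "'a::euclidean_space set" and x :: 'a
  assumes k: "k \<in> int_lattice" and ne: "supp_cube N j k \<inter> A \<noteq> {}"
  shows "k \<in> (\<lambda>(a,m). a - m) ` ({a \<in> int_lattice. A \<inter> dyadic_cube j a \<noteq> {}} \<times>
             {m \<in> int_lattice. \<forall>b\<in>Basis. \<bar>m \<bullet> b\<bar> \<le> real N})"
proof -
  obtain x :: 'a where x: "x \<in> supp_cube N j k" "x \<in> A" using ne by blast
  define a where "a = (\<Sum>b\<in>Basis. of_int \<lfloor>((2::real)^j *\<^sub>R x) \<bullet> b\<rfloor> *\<^sub>R b)"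
  have a: "a \<in> int_lattice" "\<And>b. b \<in> Basis \<Longrightarrow> a \<bullet> b = of_int \<lfloor>((2::real)^j *\<^sub>R x) \<bullet> b\<rfloor>"
    using floor_vec[of "(2::real)^j *\<^sub>R x"] unfolding a_def by auto
  have xb: "k \<bullet> b \<le> 2^j * (x \<bullet> b) \<and> 2^j * (x \<bullet> b) \<le> k \<bullet> b + N" if "b \<in> Basis" for b
    using x(1) that unfolding supp_cube_def mem_box by (auto simp: inner_simps field_simps)
  have kint: "k \<bullet> b \<in> \<int>" if "b \<in> Basis" for b using k that unfolding int_lattice_def by auto
  have "x \<in> dyadic_cube j a"
    unfolding dyadic_cube_def mem_box two_powr_neg
  proof safe
    fix b :: 'a assume b: "b \<in> Basis"
    have "of_int \<lfloor>2^j * (x \<bullet> b)\<rfloor> \<le> 2^j * (x \<bullet> b)" "2^j * (x \<bullet> b) \<le> of_int \<lfloor>2^j * (x \<bullet> b)\<rfloor> + 1"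
      by linarith+
    then show "(1 / 2 ^ j) *\<^sub>R a \<bullet> b \<le> x \<bullet> b" "x \<bullet> b \<le> (1 / 2 ^ j) *\<^sub>R (a + One) \<bullet> b"
      using a(2)[OF b] b by (auto simp: inner_simps field_simps)
  qed
  then have aD: "a \<in> {a \<in> int_lattice. A \<inter> dyadic_cube j a \<noteq> {}}" using a x(2) by blast
  have "a - k \<in> {m \<in> int_lattice. \<forall>b\<in>Basis. \<bar>m \<bullet> b\<bar> \<le> real N}"
  proof safe
    show "a - k \<in> int_lattice" using a(1) k by (rule lattice_diff)
    fix b :: 'a assume b: "b \<in> Basis"
    obtain z where z: "k \<bullet> b = of_int z" using kint[OF b] Ints_cases by blast
    have "z \<le> \<lfloor>2^j * (x \<bullet> b)\<rfloor>" using xb[OF b] z by (simp add: le_floor_iff)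
    moreover have "\<lfloor>2^j * (x \<bullet> b)\<rfloor> \<le> z + int N" using xb[OF b] z by (simp add: floor_le_iff)
    ultimately show "\<bar>(a - k) \<bullet> b\<bar> \<le> real N"
      using a(2)[OF b] z by (simp add: inner_diff_left)
  qed
  moreover have "k = a - (a - k)" by simp
  ultimately show ?thesis using aD by (auto intro!: image_eqI[where x="(a, a - k)"])
qed


lemma wav_facts:
  fixes \<phi> :: "'a::euclidean_space \<Rightarrow> real"
  assumes wav: "wavelet_system r N \<phi> \<psi>"
  shows "integrable lborel \<phi>"
    and "\<And>y. \<phi> y \<noteq> 0 \<Longrightarrow> y \<in> cbox 0 (real N *\<^sub>R One)"
    and "\<And>i. i \<in> {1..2^DIM('a) - 1} \<Longrightarrow> integrable lborel (\<psi> i)"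
    and "\<And>i. i \<in> {1..2^DIM('a) - 1} \<Longrightarrow> (LINT x|lborel. \<psi> i x) = 0"
    and "\<And>i y. i \<in> {1..2^DIM('a) - 1} \<Longrightarrow> \<psi> i y \<noteq> 0 \<Longrightarrow> y \<in> cbox 0 (real N *\<^sub>R One)"
proof -
  note W = wav[unfolded wavelet_system_def]
  show "integrable lborel \<phi>" using W by blast
  show "\<phi> y \<noteq> 0 \<Longrightarrow> y \<in> cbox 0 (real N *\<^sub>R One)" for y
    using W closure_subset[of "{x. \<phi> x \<noteq> 0}"] by blast
  show "\<psi> i y \<noteq> 0 \<Longrightarrow> y \<in> cbox 0 (real N *\<^sub>R One)" if "i \<in> {1..2^DIM('a) - 1}" for i y
    using W that closure_subset[of "{x. \<psi> i x \<noteq> 0}"] by blast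
  fix i :: nat assume i: "i \<in> {1..2^DIM('a) - 1}"
  have mom: "\<forall>i\<in>{1..2^DIM('a) - 1}. \<forall>\<alpha>::'a \<Rightarrow> nat. (\<Sum>b\<in>Basis. \<alpha> b) \<le> r - 1 \<longrightarrow>
        integrable lborel (\<lambda>x. (\<Prod>b\<in>Basis. (x \<bullet> b) ^ \<alpha> b) * \<psi> i x) \<and>
        (LINT x|lborel. (\<Prod>b\<in>Basis. (x \<bullet> b) ^ \<alpha> b) * \<psi> i x) = 0"
    using W by (elim conjE) assumption
  have m: "integrable lborel (\<lambda>x. (\<Prod>b\<in>Basis. (x \<bullet> b) ^ (\<lambda>_. 0::nat) b) * \<psi> i x) \<and>
        (LINT x|lborel. (\<Prod>b\<in>Basis. (x \<bullet> b) ^ (\<lambda>_. 0::nat) b) * \<psi> i x) = 0"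
    using mom[rule_format, OF i, of "\<lambda>_. 0"] by simp
  then show "integrable lborel (\<psi> i)" "(LINT x|lborel. \<psi> i x) = 0" by simp_all
qed

lemma fin_supp:
  fixes f :: "'b \<Rightarrow> real"
  assumes "finite F" "F \<subseteq> A" "\<And>x. x \<in> A \<Longrightarrow> x \<notin> F \<Longrightarrow> f x = 0"
  shows "f summable_on A" "infsum f A = sum f F"
proof -
  have "f summable_on A \<longleftrightarrow> f summable_on F"
    using assms by (intro summable_on_cong_neutral) auto
  then show "f summable_on A" using assms by simp
  have "infsum f A = infsum f F"
    using assms by (intro infsum_cong_neutral) auto
  then show "infsum f A = sum f F" using assms by simp
qed


theorem mainTheorem8:
  fixes \<Omega> :: "'a::euclidean_space set"
    and \<phi> :: "'a \<Rightarrow> real" and \<psi> :: "nat \<Rightarrow> 'a \<Rightarrow> real"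
    and r N :: nat
  assumes wav: "wavelet_system r N \<phi> \<psi>" and r: "r \<ge> 1"
    and borel: "\<Omega> \<in> sets borel" and bdd: "bounded \<Omega>"
  shows "besov \<phi> \<psi> 0 \<infinity> \<infinity> (indicator \<Omega>) \<and>
    (\<forall>s p. p > 0 \<longrightarrow>
          bdd_above (range (\<lambda>j. 2 powr ((s * p - real DIM('a)) * real j)
                                  * real (Ncount j (lebesgue_boundary \<Omega>)))) \<longrightarrow>
          besov \<phi> \<psi> s (ennreal p) \<infinity> (indicator \<Omega>)) \<and>
    (\<forall>s p q. p > 0 \<longrightarrow> q > 0 \<longrightarrow>
          summable (\<lambda>j. (2 powr ((s * p - real DIM('a)) * real j)
                          * real (Ncount j (lebesgue_boundary \<Omega>))) powr (q / p)) \<longrightarrow>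
          besov \<phi> \<psi> s (ennreal p) (ennreal q) (indicator \<Omega>))"
proof -
  note W = wav_facts[OF wav]
  define I1 where "I1 = {1..2^DIM('a) - 1::nat}"
  define Cphi where "Cphi = (LINT x|lborel. \<bar>\<phi> x\<bar>)"
  define Cpsi where "Cpsi = (\<Sum>i\<in>I1. LINT x|lborel. \<bar>\<psi> i x\<bar>)"
  have Cpsi0: "0 \<le> Cpsi" unfolding Cpsi_def by (auto intro!: sum_nonneg)
  have Bphi: "\<bar>coef_phi \<phi> (indicator \<Omega>) k\<bar> \<le> Cphi" for k
    using coef_bound[OF W(1) borel, of 0 k] by (simp add: coef_phi_def Cphi_def)
  have Bpsi: "\<bar>coef_psi \<psi> (indicator \<Omega>) j i k\<bar> \<le> Cpsi" if i: "i \<in> I1" for j i k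
  proof -
    have "(LINT x|lborel. \<bar>\<psi> i x\<bar>) \<le> Cpsi"
      unfolding Cpsi_def using i by (intro member_le_sum) (auto simp: I1_def)
    then show ?thesis
      using coef_bound[OF W(3) borel, of i j k] i unfolding coef_psi_def I1_def by simp
  qed
  have Zpsi: "coef_psi \<psi> (indicator \<Omega>) j i k = 0"
    if i: "i \<in> I1" and D: "supp_cube N j k \<inter> lebesgue_boundary \<Omega> = {}" for j i k
    unfolding coef_psi_def using coef_zero[OF W(3) W(4) W(5) borel D] i by (simp add: I1_def)
  have Zphi: "coef_phi \<phi> (indicator \<Omega>) k = 0" if D: "supp_cube N 0 k \<inter> \<Omega> = {}" for k
  proof -
    have "indicator \<Omega> x * \<phi> (x - k) = 0" for x
    proof (cases "x \<in> \<Omega>")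
      case True
      then have "x \<notin> supp_cube N 0 k" using D by blast
      then have "\<phi> (x - k) = 0" using W(2)[of "x - k"] mem_supp_cube[of 0 x k N] by auto
      then show ?thesis by simp
    qed simp
    then have "(\<lambda>x. indicator \<Omega> x * \<phi> (x - k)) = (\<lambda>x. 0)" by (intro ext) simp
    then show ?thesis unfolding coef_phi_def by simp
  qed
  obtain R where R: "\<And>x. x \<in> \<Omega> \<Longrightarrow> norm x \<le> R" using bdd bounded_iff by blast
  have bdry: "norm x \<le> R + 1" if x: "x \<in> lebesgue_boundary \<Omega>" for x
  proof -
    have "emeasure lebesgue (ball x 1 \<inter> \<Omega>) > 0" using x unfolding lebesgue_boundary_def by auto
    then have "ball x 1 \<inter> \<Omega> \<noteq> {}" by auto
    then obtain y where y: "y \<in> \<Omega>" "dist x y < 1" by (auto simp: dist_commute)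
    have "norm x \<le> norm y + norm (x - y)" by (rule norm_triangle_sub)
    then show ?thesis using R[OF y(1)] y(2) by (simp add: dist_norm)
  qed
  define P where "P = {k \<in> (int_lattice::'a set). \<forall>b\<in>Basis. \<bar>k \<bullet> b\<bar> \<le> R + real N}"
  have finP: "finite P" unfolding P_def by (rule finite_lattice_box)
  have Pphi: "k \<in> P" if k: "k \<in> int_lattice" and nz: "coef_phi \<phi> (indicator \<Omega>) k \<noteq> 0" for k
  proof -
    obtain x where x: "x \<in> supp_cube N 0 k" "x \<in> \<Omega>" using Zphi nz by blast
    have "\<bar>k \<bullet> b\<bar> \<le> R + real N" if b: "b \<in> Basis" for b
    proof -
      have "k \<bullet> b \<le> x \<bullet> b" "x \<bullet> b \<le> k \<bullet> b + real N"
        using x(1) b unfolding supp_cube_def mem_box by (auto simp: inner_simps)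
      moreover have "\<bar>x \<bullet> b\<bar> \<le> R" using Basis_le_norm[OF b, of x] R[OF x(2)] by simp
      ultimately show ?thesis by linarith
    qed
    then show ?thesis using k unfolding P_def by blast
  qed
  define D where "D j = {a \<in> (int_lattice::'a set). lebesgue_boundary \<Omega> \<inter> dyadic_cube j a \<noteq> {}}" for j
  have ND: "Ncount j (lebesgue_boundary \<Omega>) = card (D j)" for j
    unfolding Ncount_def D_def by simp
  have finD: "finite (D j)" for j
  proof (rule finite_subset[OF _ finite_lattice_box[of "2^j * (R + 1) + 1"]])
    show "D j \<subseteq> {k \<in> int_lattice. \<forall>b\<in>Basis. \<bar>k \<bullet> b\<bar> \<le> 2 ^ j * (R + 1) + 1}"
    proof safe
      fix a assume "a \<in> D j"
      then obtain x where a: "a \<in> int_lattice" and x: "x \<in> lebesgue_boundary \<Omega>" "x \<in> dyadic_cube j a"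
        unfolding D_def by blast
      show "a \<in> int_lattice" by fact
      fix b :: 'a assume b: "b \<in> Basis"
      have "a \<bullet> b \<le> 2^j * (x \<bullet> b)" "2^j * (x \<bullet> b) \<le> a \<bullet> b + 1"
        using x(2) b unfolding dyadic_cube_def mem_box two_powr_neg by (auto simp: inner_simps field_simps)
      moreover have "\<bar>x \<bullet> b\<bar> \<le> R + 1" using Basis_le_norm[OF b, of x] bdry[OF x(1)] by simp
      moreover have "\<bar>2^j * (x \<bullet> b)\<bar> \<le> 2^j * (R + 1)"
        using calculation(3) by (simp add: abs_mult)
      ultimately show "\<bar>a \<bullet> b\<bar> \<le> 2 ^ j * (R + 1) + 1" by linarith
    qed
  qed
  define M where "M = {m \<in> (int_lattice::'a set). \<forall>b\<in>Basis. \<bar>m \<bullet> b\<bar> \<le> real N}"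
  have finM: "finite M" unfolding M_def by (rule finite_lattice_box)
  define K where "K j = (\<lambda>(a,m). a - m) ` (D j \<times> M)" for j
  have finK: "finite (K j)" for j unfolding K_def using finD finM by auto
  have cardK: "card (K j) \<le> card (D j) * card M" for j
    unfolding K_def using card_image_le[of "D j \<times> M" "\<lambda>(a,m). a - m"] finD finM
    by (simp add: card_cartesian_product)
  have Klat: "K j \<subseteq> int_lattice" for j
    unfolding K_def D_def M_def by (auto intro: lattice_diff)
  have Kz: "coef_psi \<psi> (indicator \<Omega>) j i k = 0" if "i \<in> I1" "k \<in> int_lattice" "k \<notin> K j" for i j k
  proof (rule Zpsi[OF that(1)], rule ccontr)
    assume "supp_cube N j k \<inter> lebesgue_boundary \<Omega> \<noteq> {}"
    from count_cover[OF that(2) this] have "k \<in> K j" unfolding K_def D_def M_def .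
    then show False using that(3) by blast
  qed
  have I1ne: "(1, 0) \<in> I1 \<times> int_lattice"
    unfolding I1_def using lattice_zero one_less_power[of "2::nat" "DIM('a)"] by (auto simp: Suc_le_eq)

  have finI1: "finite I1" unfolding I1_def by simp
  have part1: "besov \<phi> \<psi> 0 \<infinity> \<infinity> (indicator \<Omega>)"
  proof -
    have A1: "bdd_above ((\<lambda>k. \<bar>coef_phi \<phi> (indicator \<Omega>) k\<bar>) ` int_lattice)"
      by (rule bdd_aboveI2[where M=Cphi]) (rule Bphi)
    have A2: "bdd_above ((\<lambda>(i,k). \<bar>2 powr (0 * real j) * coef_psi \<psi> (indicator \<Omega>) j i k\<bar>) ` (I1 \<times> int_lattice))" for j
      by (rule bdd_aboveI2[where M=Cpsi]) (auto intro: Bpsi)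
    have A3: "bdd_above (range (\<lambda>j. SUP (i,k)\<in>I1 \<times> int_lattice. \<bar>2 powr (0 * real j) * coef_psi \<psi> (indicator \<Omega>) j i k\<bar>))"
    proof (rule bdd_aboveI2[where M=Cpsi])
      fix j
      show "(SUP (i,k)\<in>I1 \<times> int_lattice. \<bar>2 powr (0 * real j) * coef_psi \<psi> (indicator \<Omega>) j i k\<bar>) \<le> Cpsi"
        using I1ne by (intro cSUP_least) (auto intro: Bpsi)
    qed
    show ?thesis using A1 A2 A3 unfolding besov_def Let_def I1_def by simp
  qed
  have part23: "besov \<phi> \<psi> s (ennreal p) Q (indicator \<Omega>)"
    if p: "p > 0" and hyp: "Q = \<infinity> \<and> bdd_above (range (\<lambda>j. 2 powr ((s * p - real DIM('a)) * real j)
                                  * real (Ncount j (lebesgue_boundary \<Omega>))))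
         \<or> (\<exists>q. q > 0 \<and> Q = ennreal q \<and> summable (\<lambda>j. (2 powr ((s * p - real DIM('a)) * real j)
                          * real (Ncount j (lebesgue_boundary \<Omega>))) powr (q / p)))" for s p Q
  proof -
    define t where "t j = (\<lambda>(i,k). \<bar>2 powr ((s - real DIM('a) / p) * real j) * coef_psi \<psi> (indicator \<Omega>) j i k\<bar> powr p)" for j
    define Sj where "Sj j = infsum (t j) (I1 \<times> int_lattice)" for j
    define KK where "KK = real (card I1) * real (card M) * Cpsi powr p"
    define a where "a j = 2 powr ((s * p - real DIM('a)) * real j) * real (Ncount j (lebesgue_boundary \<Omega>))" for j
    have a0: "0 \<le> a j" for j unfolding a_def by simp
    have KK0: "0 \<le> KK" unfolding KK_def by simp
    have t0: "0 \<le> t j x" for j x unfolding t_def by (auto split: prod.splits)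
    have tb: "t j (i,k) \<le> 2 powr ((s * p - real DIM('a)) * real j) * Cpsi powr p" if i: "i \<in> I1" for j i k
    proof -
      define e where "e = (s - real DIM('a) / p) * real j"
      have "\<bar>2 powr e * coef_psi \<psi> (indicator \<Omega>) j i k\<bar> \<le> 2 powr e * Cpsi"
        using Bpsi[OF i, of j k] by (simp add: abs_mult)
      then have "\<bar>2 powr e * coef_psi \<psi> (indicator \<Omega>) j i k\<bar> powr p \<le> (2 powr e * Cpsi) powr p"
        using p by (intro powr_mono2) auto
      also have "\<dots> = 2 powr (e * p) * Cpsi powr p"
        using Cpsi0 by (simp add: powr_mult powr_powr)
      also have "e * p = (s * p - real DIM('a)) * real j"
        unfolding e_def using p by (simp add: field_simps)
      finally show ?thesis unfolding t_def e_def by simp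
    qed
    have tz: "t j x = 0" if "x \<in> I1 \<times> int_lattice" "x \<notin> I1 \<times> K j" for j x
      using that Kz unfolding t_def by (auto split: prod.splits)
    have sub: "I1 \<times> K j \<subseteq> I1 \<times> int_lattice" for j using Klat by auto
    have tsum: "t j summable_on (I1 \<times> int_lattice)" and Seq: "Sj j = sum (t j) (I1 \<times> K j)" for j
      using fin_supp[OF _ sub tz] finI1 finK unfolding Sj_def by auto
    have S0: "0 \<le> Sj j" for j unfolding Sj_def by (rule infsum_nonneg) (rule t0)
    have Sb: "Sj j \<le> KK * a j" for j
    proof -
      have "Sj j \<le> real (card (I1 \<times> K j)) * (2 powr ((s * p - real DIM('a)) * real j) * Cpsi powr p)"
        unfolding Seq by (rule sum_bounded_above) (auto intro: tb)
      also have "\<dots> \<le> real (card I1 * (card (D j) * card M)) * (2 powr ((s * p - real DIM('a)) * real j) * Cpsi powr p)"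
      proof (rule mult_right_mono)
        show "real (card (I1 \<times> K j)) \<le> real (card I1 * (card (D j) * card M))"
          using cardK[of j] unfolding of_nat_le_iff card_cartesian_product by (rule mult_le_mono2)
      qed simp
      also have "\<dots> = KK * a j" unfolding KK_def a_def ND by (simp add: algebra_simps)
      finally show ?thesis .
    qed
    have phis: "(\<lambda>k. \<bar>coef_phi \<phi> (indicator \<Omega>) k\<bar> powr p) summable_on int_lattice"
      using finP by (rule fin_supp(1)) (auto simp: P_def dest: Pphi)
    have pp: "enn2real (ennreal p) = p" "ennreal p \<noteq> \<infinity>" using p by auto
    have iff: "besov \<phi> \<psi> s (ennreal p) Q (indicator \<Omega>) \<longleftrightarrow>
       (if Q = \<infinity> then bdd_above (range Sj) else summable (\<lambda>j. Sj j powr (enn2real Q / p)))"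
      using phis tsum pp unfolding besov_def Let_def Sj_def t_def I1_def by simp
    from hyp show ?thesis
    proof
      assume h: "Q = \<infinity> \<and> bdd_above (range (\<lambda>j. 2 powr ((s * p - real DIM('a)) * real j)
                                  * real (Ncount j (lebesgue_boundary \<Omega>))))"
      then obtain B where B: "\<And>j. a j \<le> B" unfolding a_def bdd_above_def by auto
      have "bdd_above (range Sj)"
      proof (rule bdd_aboveI2[where M="KK * B"])
        fix j show "Sj j \<le> KK * B" using Sb[of j] mult_left_mono[OF B[of j] KK0] by linarith
      qed
      then show ?thesis using iff h by simp
    next
      assume "\<exists>q. q > 0 \<and> Q = ennreal q \<and> summable (\<lambda>j. (2 powr ((s * p - real DIM('a)) * real j)
                          * real (Ncount j (lebesgue_boundary \<Omega>))) powr (q / p))"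
      then obtain q where q: "q > 0" "Q = ennreal q" and sa: "summable (\<lambda>j. a j powr (q / p))"
        unfolding a_def by blast
      have "summable (\<lambda>j. Sj j powr (q / p))"
      proof (rule summable_comparison_test')
        show "summable (\<lambda>j. KK powr (q / p) * a j powr (q / p))" using sa by (rule summable_mult)
        fix j :: nat
        have "Sj j powr (q / p) \<le> (KK * a j) powr (q / p)"
          using Sb[of j] S0[of j] p q by (intro powr_mono2) auto
        also have "\<dots> = KK powr (q / p) * a j powr (q / p)" using KK0 a0 by (simp add: powr_mult)
        finally show "norm (Sj j powr (q / p)) \<le> KK powr (q / p) * a j powr (q / p)" by simp
      qed
      then show ?thesis using iff q by simp
    qed
  qed
  show ?thesis
  proof (intro conjI allI impI)
    show "besov \<phi> \<psi> 0 \<infinity> \<infinity> (indicator \<Omega>)" by (rule part1)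
  next
    fix s p :: real assume "p > 0" and "bdd_above (range (\<lambda>j. 2 powr ((s * p - real DIM('a)) * real j)
                                  * real (Ncount j (lebesgue_boundary \<Omega>))))"
    then show "besov \<phi> \<psi> s (ennreal p) \<infinity> (indicator \<Omega>)" by (intro part23) auto
  next
    fix s p q :: real assume "p > 0" "q > 0" and "summable (\<lambda>j. (2 powr ((s * p - real DIM('a)) * real j)
                          * real (Ncount j (lebesgue_boundary \<Omega>))) powr (q / p))"
    then show "besov \<phi> \<psi> s (ennreal p) (ennreal q) (indicator \<Omega>)" by (intro part23) auto
  qed
qed

end
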